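(* Let $(M,\Sigma)$ be a measurable space, $r\ge1$, and $\mu_1,\dots,\mu_r$ non-atomic countably additive finite measures on $\Sigma$. Let $S\in\Sigma$ with $\prod_{i=1}^r\mu_i(S)\neq0$. Then there exist pairwise disjoint measurable sets $R^1,\dots,R^r\subseteq S$ and a permutation $(l_1,\dots,l_r)$ of $\{1,\dots,r\}$ with $\mu_{l_k}(R^k)=\frac1r\mu_{l_k}(S)$ for each $k$ and $\mu_{l_j}(R^k)\le\frac1r\mu_{l_j}(S)$ for all $j>k$, together with a measurable subset $H\subseteq S$ such that $\mu_{l_1}(H)\ge 2^{-(r-1)}\mu_{l_1}(S)$ and $H$ has a gentleman's solution, i.e. a partition $H=F_1\sqcup\dots\sqcup F_r$ into measurable sets with $\mu_i(F_i)\le\mu_i(F_j)$ for all $i,j$.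
   Context: Partition elements may be empty. *)

theory Defs
  imports "HOL-Analysis.Analysis"
begin

definition nonatomic :: "'a measure \<Rightarrow> bool" where
  "nonatomic N \<longleftrightarrow> (\<forall>A\<in>sets N. emeasure N A > 0 \<longrightarrow>
      (\<exists>B\<in>sets N. B \<subseteq> A \<and> 0 < emeasure N B \<and> emeasure N B < emeasure N A))"

definition gentleman_solution ::
  "'a measure \<Rightarrow> (nat \<Rightarrow> 'a measure) \<Rightarrow> nat \<Rightarrow> 'a set \<Rightarrow> (nat \<Rightarrow> 'a set) \<Rightarrow> bool" where
  "gentleman_solution M mu r H F \<longleftrightarrow>
     (\<forall>i\<in>{1..r}. F i \<in> sets M) \<and>
     (\<forall>i\<in>{1..r}. \<forall>j\<in>{1..r}. i \<noteq> j \<longrightarrow> F i \<inter> F j = {}) \<and>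
     (\<Union>i\<in>{1..r}. F i) = H \<and>
     (\<forall>i\<in>{1..r}. \<forall>j\<in>{1..r}. measure (mu i) (F i) \<le> measure (mu i) (F j))"

end

theory Submission
  imports Defs
begin


definition good :: "'a measure \<Rightarrow> ('a set \<Rightarrow> real) \<Rightarrow> bool" where
  "good M f \<longleftrightarrow> (\<forall>A\<in>sets M. 0 \<le> f A) \<and>
     (\<forall>A\<in>sets M. \<forall>B\<in>sets M. A \<inter> B = {} \<longrightarrow> f (A \<union> B) = f A + f B) \<and>
     (\<forall>X. (\<forall>n. X n \<in> sets M) \<longrightarrow> incseq X \<longrightarrow> (\<lambda>n. f (X n)) \<longlonglongrightarrow> f (\<Union>n. X n)) \<and>
     (\<forall>A\<in>sets M. 0 < f A \<longrightarrow> (\<exists>B\<in>sets M. B \<subseteq> A \<and> 0 < f B \<and> f B < f A))"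

lemma good_nonneg: "good M f \<Longrightarrow> A \<in> sets M \<Longrightarrow> 0 \<le> f A"
  unfolding good_def by blast

lemma good_add: "good M f \<Longrightarrow> A \<in> sets M \<Longrightarrow> B \<in> sets M \<Longrightarrow> A \<inter> B = {} \<Longrightarrow> f (A \<union> B) = f A + f B"
  unfolding good_def by blast

lemma good_lim: "good M f \<Longrightarrow> (\<And>n. X n \<in> sets M) \<Longrightarrow> incseq X \<Longrightarrow> (\<lambda>n. f (X n)) \<longlonglongrightarrow> f (\<Union>n. X n)"
  unfolding good_def by blast

lemma good_na: "good M f \<Longrightarrow> A \<in> sets M \<Longrightarrow> 0 < f A \<Longrightarrow> \<exists>B\<in>sets M. B \<subseteq> A \<and> 0 < f B \<and> f B < f A"
  unfolding good_def by blast

lemma good_empty: "good M f \<Longrightarrow> f {} = 0"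
  using good_add[of M f "{}" "{}"] by simp

lemma good_diff: "good M f \<Longrightarrow> A \<in> sets M \<Longrightarrow> B \<in> sets M \<Longrightarrow> B \<subseteq> A \<Longrightarrow> f (A - B) = f A - f B"
proof -
  assume g: "good M f" and A: "A \<in> sets M" and B: "B \<in> sets M" and s: "B \<subseteq> A"
  have "A = B \<union> (A - B)" using s by blast
  then have "f A = f B + f (A - B)" using good_add[OF g B, of "A - B"] A B by auto
  then show ?thesis by simp
qed

lemma good_mono: "good M f \<Longrightarrow> A \<in> sets M \<Longrightarrow> B \<in> sets M \<Longrightarrow> B \<subseteq> A \<Longrightarrow> f B \<le> f A"
  using good_diff[of M f A B] good_nonneg[of M f "A - B"] by auto

lemma good_sum: assumes f: "good M f" and g: "good M g" shows "good M (\<lambda>X. f X + g X)"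
proof -
  have na: "\<exists>B\<in>sets M. B \<subseteq> A \<and> 0 < f B + g B \<and> f B + g B < f A + g A"
    if A: "A \<in> sets M" and p: "0 < f A + g A" for A
  proof (cases "0 < f A")
    case True
    then obtain B where B: "B \<in> sets M" "B \<subseteq> A" "0 < f B" "f B < f A" using good_na[OF f A] by blast
    have "g B \<le> g A" using good_mono[OF g A B(1) B(2)] .
    moreover have "0 \<le> g B" using good_nonneg[OF g B(1)] .
    ultimately show ?thesis using B by (intro bexI[of _ B]) auto
  next
    case False
    then have "0 < g A" using p by simp
    then obtain B where B: "B \<in> sets M" "B \<subseteq> A" "0 < g B" "g B < g A" using good_na[OF g A] by blast
    have "f B \<le> f A" using good_mono[OF f A B(1) B(2)] .
    moreover have "0 \<le> f B" using good_nonneg[OF f B(1)] .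
    ultimately show ?thesis using B by (intro bexI[of _ B]) auto
  qed
  show ?thesis unfolding good_def
    using good_nonneg[OF f] good_nonneg[OF g] good_add[OF f] good_add[OF g]
      good_lim[OF f] good_lim[OF g] na
    by (auto intro: tendsto_add add_nonneg_nonneg)
qed

lemma good_measure:
  assumes s: "sets N = sets M" and fm: "finite_measure N" and na: "nonatomic N"
  shows "good M (measure N)"
proof -
  have e: "emeasure N A = ennreal (measure N A)" for A using finite_measure.emeasure_eq_measure[OF fm] .
  have n1: "\<exists>B\<in>sets M. B \<subseteq> A \<and> 0 < measure N B \<and> measure N B < measure N A"
    if A: "A \<in> sets M" and p: "0 < measure N A" for A
  proof -
    have "0 < emeasure N A" using p e by (simp add: ennreal_less_zero_iff)
    then obtain B where B: "B \<in> sets N" "B \<subseteq> A" "0 < emeasure N B" "emeasure N B < emeasure N A"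
      using na A s unfolding nonatomic_def by blast
    have "0 < measure N B" using B(3) e by (simp add: ennreal_less_zero_iff)
    moreover have "measure N B < measure N A" using B(4) e by (simp add: ennreal_less_iff)
    ultimately show ?thesis using B s by blast
  qed
  show ?thesis unfolding good_def
  proof (intro conjI ballI allI impI)
    fix A B assume "A \<in> sets M" "B \<in> sets M" "A \<inter> B = {}"
    then show "measure N (A \<union> B) = measure N A + measure N B"
      using finite_measure.finite_measure_Union[OF fm] s by auto
  next
    fix X :: "nat \<Rightarrow> 'a set" assume "\<forall>n. X n \<in> sets M" "incseq X"
    then show "(\<lambda>n. measure N (X n)) \<longlonglongrightarrow> measure N (\<Union>n. X n)"
      using finite_measure.finite_Lim_measure_incseq[OF fm, of X] s by auto
  qed (use n1 in auto)
qed



lemma good_small_pow: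
  assumes g: "good M f" and A: "A \<in> sets M" and p: "0 < f A"
  shows "\<exists>B\<in>sets M. B \<subseteq> A \<and> 0 < f B \<and> f B \<le> f A / 2 ^ n"
proof (induction n)
  case 0 then show ?case using A p by auto
next
  case (Suc n)
  then obtain B where B: "B \<in> sets M" "B \<subseteq> A" "0 < f B" "f B \<le> f A / 2 ^ n" by blast
  obtain C where C: "C \<in> sets M" "C \<subseteq> B" "0 < f C" "f C < f B" using good_na[OF g B(1) B(3)] by blast
  have d: "f (B - C) = f B - f C" using good_diff[OF g B(1) C(1) C(2)] .
  show ?case
  proof (cases "f C \<le> f B / 2")
    case True
    have "f B / 2 \<le> (f A / 2 ^ n) / 2" using B(4) by simp
    moreover have "f A / 2 ^ Suc n = (f A / 2 ^ n) / 2" by simp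
    ultimately have "f C \<le> f A / 2 ^ Suc n" using True by linarith
    moreover have "C \<subseteq> A" using C(2) B(2) by blast
    ultimately show ?thesis using C(1,3) by blast
  next
    case False
    have "f B / 2 \<le> (f A / 2 ^ n) / 2" using B(4) by simp
    moreover have "f A / 2 ^ Suc n = (f A / 2 ^ n) / 2" by simp
    ultimately have "f (B - C) \<le> f A / 2 ^ Suc n" using False d by linarith
    moreover have "B - C \<in> sets M" using B C by auto
    moreover have "B - C \<subseteq> A" using B(2) by blast
    moreover have "0 < f (B - C)" using d C(4) by simp
    ultimately show ?thesis by blast
  qed
qed

lemma good_small:
  assumes g: "good M f" and A: "A \<in> sets M" and p: "0 < f A" and e: "0 < e"
  shows "\<exists>B\<in>sets M. B \<subseteq> A \<and> 0 < f B \<and> f B \<le> e"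
proof -
  obtain n where n: "f A / e < 2 ^ n" using real_arch_pow[of 2 "f A / e"] by auto
  then have "f A / 2 ^ n \<le> e" using e by (simp add: field_simps)
  obtain B where "B \<in> sets M" "B \<subseteq> A" "0 < f B" "f B \<le> f A / 2 ^ n"
    using good_small_pow[OF g A p, of n] by blast
  then show ?thesis using \<open>f A / 2 ^ n \<le> e\<close> by (intro bexI[of _ B]) auto
qed

lemma sierpinski:
  assumes g: "good M f" and A: "A \<in> sets M" and c0: "0 \<le> c" and cA: "c \<le> f A"
  shows "\<exists>B\<in>sets M. B \<subseteq> A \<and> f B = c"
proof -
  define S where "S B = {f D | D. D \<in> sets M \<and> D \<subseteq> A - B \<and> f D \<le> c - f B}" for B
  define Q where "Q B D \<longleftrightarrow> D \<in> sets M \<and> D \<subseteq> A - B \<and> f D \<le> c - f B \<and> Sup (S B) / 2 \<le> f D" for B D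
  define nxt where "nxt B = B \<union> (SOME D. Q B D)" for B
  define P where "P B \<longleftrightarrow> B \<in> sets M \<and> B \<subseteq> A \<and> f B \<le> c" for B
  have bdd: "bdd_above (S B)" if "P B" for B
    unfolding S_def by (rule bdd_aboveI[of _ "c - f B"]) auto
  have ne: "f {} \<in> S B" if "P B" for B
    using that good_empty[OF g] unfolding S_def P_def by auto
  have exQ: "\<exists>D. Q B D" if PB: "P B" for B
  proof (cases "Sup (S B) \<le> 0")
    case True
    then show ?thesis using PB good_empty[OF g] unfolding Q_def P_def by (intro exI[of _ "{}"]) auto
  next
    case False
    then have "Sup (S B) / 2 < Sup (S B)" by simp
    then obtain x where "x \<in> S B" "Sup (S B) / 2 < x"
      using less_cSup_iff[of "S B"] bdd[OF PB] ne[OF PB] by blast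
    then show ?thesis unfolding S_def Q_def by auto
  qed
  have Qn: "Q B (SOME D. Q B D)" if "P B" for B using someI_ex[OF exQ[OF that]] .
  have nxtP: "P (nxt B)" and nxtf: "f (nxt B) = f B + f (SOME D. Q B D)" if PB: "P B" for B
  proof -
    let ?D = "SOME D. Q B D"
    have D: "?D \<in> sets M" "?D \<subseteq> A - B" "f ?D \<le> c - f B" using Qn[OF PB] unfolding Q_def by auto
    have B: "B \<in> sets M" "B \<subseteq> A" using PB unfolding P_def by auto
    show fe: "f (nxt B) = f B + f ?D" unfolding nxt_def using good_add[OF g B(1) D(1)] D(2) by auto
    show "P (nxt B)" unfolding P_def nxt_def using B D fe nxt_def by auto
  qed
  define Bs where "Bs n = (nxt ^^ n) {}" for n
  have PBs: "P (Bs n)" for n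
  proof (induction n)
    case 0 then show ?case unfolding Bs_def P_def using c0 good_empty[OF g] by auto
  next
    case (Suc n) then show ?case unfolding Bs_def using nxtP by auto
  qed
  have BsS: "Bs (Suc n) = nxt (Bs n)" for n unfolding Bs_def by simp
  have inc: "incseq Bs" by (rule incseq_SucI) (simp add: BsS nxt_def)
  have Bsm: "Bs n \<in> sets M" for n using PBs unfolding P_def by auto
  define L where "L = (\<Union>n. Bs n)"
  have lim: "(\<lambda>n. f (Bs n)) \<longlonglongrightarrow> f L" unfolding L_def using good_lim[OF g Bsm inc] .
  have Lm: "L \<in> sets M" unfolding L_def using Bsm by auto
  have LA: "L \<subseteq> A" unfolding L_def using PBs unfolding P_def by auto
  have Lc: "f L \<le> c" using LIMSEQ_le_const2[OF lim] PBs unfolding P_def by auto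
  have "f L = c"
  proof (rule ccontr)
    assume "f L \<noteq> c"
    then have lt: "f L < c" using Lc by simp
    have ALm: "A - L \<in> sets M" using A Lm by auto
    have "f (A - L) = f A - f L" using good_diff[OF g A Lm LA] .
    then have "0 < f (A - L)" using lt cA by simp
    then obtain D0 where D0: "D0 \<in> sets M" "D0 \<subseteq> A - L" "0 < f D0" "f D0 \<le> c - f L"
      using good_small[OF g ALm, of "c - f L"] lt by auto
    have step: "f (Bs (Suc n)) \<ge> f (Bs n) + f D0 / 2" for n
    proof -
      have sub: "Bs n \<subseteq> L" unfolding L_def by auto
      have "f (Bs n) \<le> f L" using good_mono[OF g Lm Bsm sub] .
      then have "f D0 \<le> c - f (Bs n)" using D0(4) by simp
      moreover have "D0 \<subseteq> A - Bs n" using D0(2) sub by blast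
      ultimately have "f D0 \<in> S (Bs n)" unfolding S_def using D0(1) by blast
      then have "f D0 \<le> Sup (S (Bs n))" by (rule cSup_upper[OF _ bdd[OF PBs[of n]]])
      moreover have "Sup (S (Bs n)) / 2 \<le> f (SOME D. Q (Bs n) D)" using Qn[OF PBs] unfolding Q_def by auto
      ultimately show ?thesis using nxtf[OF PBs, of n] BsS by simp
    qed
    have grow: "f (Bs n) \<ge> real n * (f D0 / 2)" for n
    proof (induction n)
      case 0 then show ?case using good_nonneg[OF g Bsm] by simp
    next
      case (Suc n) then show ?case using step[of n] by (simp add: algebra_simps)
    qed
    obtain n where n: "c / (f D0 / 2) < real n" using reals_Archimedean2 by blast
    then have "c < real n * (f D0 / 2)" using D0(3) by (simp add: field_simps)
    then show False using grow[of n] PBs[of n] unfolding P_def by simp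
  qed
  then show ?thesis using Lm LA by blast
qed



primrec lev :: "('a set \<Rightarrow> 'a set) \<Rightarrow> 'a set \<Rightarrow> nat \<Rightarrow> nat \<Rightarrow> 'a set" where
  "lev h A 0 = (\<lambda>k. if k = 0 then {} else A)"
| "lev h A (Suc n) = (\<lambda>k. if even k then lev h A n (k div 2)
      else lev h A n (k div 2) \<union> h (lev h A n (k div 2 + 1) - lev h A n (k div 2)))"

context
  fixes M :: "'a measure" and I :: "nat set" and m :: "nat \<Rightarrow> 'a set \<Rightarrow> real"
    and h :: "'a set \<Rightarrow> 'a set" and A :: "'a set"
  assumes good: "\<And>i. i \<in> I \<Longrightarrow> good M (m i)"
    and hs: "\<And>X. X \<in> sets M \<Longrightarrow> h X \<in> sets M"
    and hsub: "\<And>X. X \<in> sets M \<Longrightarrow> h X \<subseteq> X"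
    and hm: "\<And>X i. X \<in> sets M \<Longrightarrow> i \<in> I \<Longrightarrow> m i (h X) = m i X / 2"
    and A: "A \<in> sets M"
begin

lemma lev_sets: "lev h A n k \<in> sets M"
proof (induction n arbitrary: k)
  case 0 then show ?case using A by simp
next
  case (Suc n) then show ?case using hs by simp
qed

lemma lev_sub: "lev h A n k \<subseteq> A"
proof (induction n arbitrary: k)
  case 0 then show ?case by simp
next
  case (Suc n)
  have "h (lev h A n (k div 2 + 1) - lev h A n (k div 2)) \<subseteq> lev h A n (k div 2 + 1) - lev h A n (k div 2)"
    using hsub lev_sets by blast
  then show ?case using Suc[of "k div 2"] Suc[of "k div 2 + 1"] by auto
qed

lemma lev_Suc: "lev h A n k \<subseteq> lev h A n (Suc k)"
proof (induction n arbitrary: k)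
  case 0 then show ?case by simp
next
  case (Suc n)
  show ?case
  proof (cases "even k")
    case True
    then have "Suc k div 2 = k div 2" "odd (Suc k)" by auto
    then show ?thesis using True by simp
  next
    case False
    then have e: "Suc k div 2 = k div 2 + 1" "even (Suc k)" by auto
    have "h (lev h A n (k div 2 + 1) - lev h A n (k div 2)) \<subseteq> lev h A n (k div 2 + 1) - lev h A n (k div 2)"
      using hsub lev_sets by blast
    then show ?thesis using False e Suc[of "k div 2"] by auto
  qed
qed

lemma lev_mono: "k \<le> k' \<Longrightarrow> lev h A n k \<subseteq> lev h A n k'"
  using lift_Suc_mono_le[of "lev h A n"] lev_Suc by blast

lemma lev_top: "2 ^ n \<le> k \<Longrightarrow> lev h A n k = A"
proof (induction n arbitrary: k)
  case 0 then show ?case by simp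
next
  case (Suc n)
  have k1: "2 ^ n \<le> k div 2" using Suc.prems by auto
  show ?case
  proof (cases "even k")
    case True then show ?thesis using Suc.IH[OF k1] by simp
  next
    case False
    have k2: "2 ^ n \<le> k div 2 + 1" using k1 by simp
    have "h {} \<subseteq> {}" using hsub[of "{}"] by simp
    then show ?thesis using False Suc.IH[OF k1] Suc.IH[OF k2] by simp
  qed
qed

lemma lev_meas: "k \<le> 2 ^ n \<Longrightarrow> i \<in> I \<Longrightarrow> m i (lev h A n k) = real k / 2 ^ n * m i A"
proof (induction n arbitrary: k)
  case 0
  then have "k = 0 \<or> k = 1" by auto
  then show ?case using good_empty[OF good[OF 0(2)]] by auto
next
  case (Suc n)
  note i = Suc.prems(2)
  note g = good[OF i]
  show ?case
  proof (cases "even k")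
    case True
    then obtain q where q: "k = 2 * q" by blast
    then have "q \<le> 2 ^ n" using Suc.prems(1) by simp
    then show ?thesis using True q Suc.IH[of q] i by simp
  next
    case False
    then obtain q where q: "k = 2 * q + 1" using oddE by blast
    then have q1: "q + 1 \<le> 2 ^ n" using Suc.prems(1) by simp
    have kd: "k div 2 = q" using q by simp
    let ?Y = "lev h A n (q + 1) - lev h A n q"
    have Ys: "?Y \<in> sets M" using lev_sets by blast
    have Yd: "m i ?Y = m i (lev h A n (q + 1)) - m i (lev h A n q)"
      using good_diff[OF g lev_sets lev_sets lev_mono[of q "q+1"]] by simp
    have disj: "lev h A n q \<inter> h ?Y = {}" using hsub[OF Ys] by blast
    have "m i (lev h A (Suc n) k) = m i (lev h A n q \<union> h ?Y)" using False kd by simp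
    also have "\<dots> = m i (lev h A n q) + m i ?Y / 2"
      using good_add[OF g lev_sets hs[OF Ys] disj] hm[OF Ys i] by simp
    also have "\<dots> = real q / 2 ^ n * m i A + (real (q+1) / 2 ^ n * m i A - real q / 2 ^ n * m i A) / 2"
      using Yd Suc.IH[of q] Suc.IH[of "q+1"] q1 i by simp
    also have "\<dots> = real k / 2 ^ Suc n * m i A" using q by (simp add: field_simps)
    finally show ?thesis .
  qed
qed

definition dchain :: "real \<Rightarrow> 'a set" where
  "dchain s = (\<Union>n. lev h A n (nat \<lfloor>s * 2 ^ n\<rfloor>))"

lemma chain_sets: "dchain s \<in> sets M"
  unfolding dchain_def using lev_sets by auto

lemma chain_sub: "dchain s \<subseteq> A"
  unfolding dchain_def using lev_sub by auto

lemma chain_mono: "s \<le> s' \<Longrightarrow> dchain s \<subseteq> dchain s'"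
proof -
  assume "s \<le> s'"
  then have "nat \<lfloor>s * 2 ^ n\<rfloor> \<le> nat \<lfloor>s' * 2 ^ n\<rfloor>" for n
    by (intro nat_mono floor_mono) (simp add: mult_right_mono)
  then show ?thesis unfolding dchain_def using lev_mono by blast
qed

lemma chain_meas:
  assumes s: "0 \<le> s" "s \<le> 1" and i: "i \<in> I"
  shows "m i (dchain s) = s * m i A"
proof -
  define X where "X n = lev h A n (nat \<lfloor>s * 2 ^ n\<rfloor>)" for n
  have fl: "2 * nat \<lfloor>s * 2 ^ n\<rfloor> \<le> nat \<lfloor>s * 2 ^ Suc n\<rfloor>" for n
  proof -
    have "2 * \<lfloor>s * 2 ^ n\<rfloor> \<le> \<lfloor>s * 2 ^ Suc n\<rfloor>"
    proof -
      have "real_of_int (2 * \<lfloor>s * 2 ^ n\<rfloor>) \<le> s * 2 ^ Suc n"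
        using of_int_floor_le[of "s * 2 ^ n"] by simp
      then show ?thesis by (simp add: le_floor_iff)
    qed
    then show ?thesis using s by (simp add: nat_mult_distrib[symmetric])
  qed
  have inc: "incseq X"
  proof (rule incseq_SucI)
    fix n
    have "X n = lev h A (Suc n) (2 * nat \<lfloor>s * 2 ^ n\<rfloor>)" unfolding X_def by simp
    also have "\<dots> \<subseteq> X (Suc n)" unfolding X_def using lev_mono[OF fl] .
    finally show "X n \<subseteq> X (Suc n)" .
  qed
  have lim1: "(\<lambda>n. m i (X n)) \<longlonglongrightarrow> m i (dchain s)"
    unfolding dchain_def X_def[symmetric] using good_lim[OF good[OF i] _ inc] lev_sets unfolding X_def by auto
  have kb: "nat \<lfloor>s * 2 ^ n\<rfloor> \<le> 2 ^ n" for n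
  proof -
    have "s * 2 ^ n \<le> 2 ^ n" using s by simp
    then have "\<lfloor>s * 2 ^ n\<rfloor> \<le> 2 ^ n" by (metis floor_le_numeral floor_mono floor_of_nat of_int_numeral of_nat_numeral floor_power)
    then show ?thesis by (simp add: nat_le_iff)
  qed
  have eqX: "m i (X n) = real (nat \<lfloor>s * 2 ^ n\<rfloor>) / 2 ^ n * m i A" for n
    unfolding X_def using lev_meas[OF kb i] .
  have a_lim: "(\<lambda>n. real (nat \<lfloor>s * 2 ^ n\<rfloor>) / 2 ^ n) \<longlonglongrightarrow> s"
  proof (rule tendsto_sandwich[of "\<lambda>n. s - 1 / 2 ^ n" _ _ "\<lambda>n. s"])
    show "\<forall>\<^sub>F n in sequentially. s - 1 / 2 ^ n \<le> real (nat \<lfloor>s * 2 ^ n\<rfloor>) / 2 ^ n"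
    proof (intro always_eventually allI)
      fix n :: nat
      have "s * 2 ^ n - 1 \<le> real_of_int \<lfloor>s * 2 ^ n\<rfloor>" by linarith
      moreover have "real (nat \<lfloor>s * 2 ^ n\<rfloor>) = real_of_int \<lfloor>s * 2 ^ n\<rfloor>" using s by simp
      ultimately have "(s * 2 ^ n - 1) / 2 ^ n \<le> real (nat \<lfloor>s * 2 ^ n\<rfloor>) / 2 ^ n"
        by (intro divide_right_mono) auto
      moreover have "s - 1 / 2 ^ n = (s * 2 ^ n - 1) / 2 ^ n" by (simp add: field_simps)
      ultimately show "s - 1 / 2 ^ n \<le> real (nat \<lfloor>s * 2 ^ n\<rfloor>) / 2 ^ n" by simp
    qed
    show "\<forall>\<^sub>F n in sequentially. real (nat \<lfloor>s * 2 ^ n\<rfloor>) / 2 ^ n \<le> s"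
    proof (intro always_eventually allI)
      fix n :: nat
      have "real_of_int \<lfloor>s * 2 ^ n\<rfloor> \<le> s * 2 ^ n" by linarith
      moreover have "real (nat \<lfloor>s * 2 ^ n\<rfloor>) = real_of_int \<lfloor>s * 2 ^ n\<rfloor>" using s by simp
      ultimately show "real (nat \<lfloor>s * 2 ^ n\<rfloor>) / 2 ^ n \<le> s" by (simp add: field_simps)
    qed
    have "(\<lambda>n. 1 / (2::real) ^ n) \<longlonglongrightarrow> 0" using LIMSEQ_divide_realpow_zero[of 2 1] by simp
    then show "(\<lambda>n. s - 1 / 2 ^ n) \<longlonglongrightarrow> s" using tendsto_diff[of "\<lambda>n. s" s sequentially] by force
  qed auto
  have "(\<lambda>n. m i (X n)) \<longlonglongrightarrow> s * m i A"
    unfolding eqX by (intro tendsto_mult a_lim tendsto_const)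
  then show ?thesis using LIMSEQ_unique lim1 by blast
qed

end



lemma chain_exists:
  fixes M :: "'a measure" and I :: "nat set" and m :: "nat \<Rightarrow> 'a set \<Rightarrow> real"
  assumes good: "\<And>i. i \<in> I \<Longrightarrow> good M (m i)"
    and hv: "\<And>X. X \<in> sets M \<Longrightarrow> \<exists>B\<in>sets M. B \<subseteq> X \<and> (\<forall>i\<in>I. m i B = m i X / 2)"
    and A: "A \<in> sets M"
  shows "\<exists>D. (\<forall>s. D s \<in> sets M \<and> D s \<subseteq> A) \<and> (\<forall>s s'. s \<le> s' \<longrightarrow> D s \<subseteq> D s') \<and>
    (\<forall>s i. 0 \<le> s \<longrightarrow> s \<le> 1 \<longrightarrow> i \<in> I \<longrightarrow> m i (D s) = s * m i A)"
proof -
  define h where "h X = (SOME B. B \<in> sets M \<and> B \<subseteq> X \<and> (\<forall>i\<in>I. m i B = m i X / 2))" for X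
  have hp: "h X \<in> sets M \<and> h X \<subseteq> X \<and> (\<forall>i\<in>I. m i (h X) = m i X / 2)" if "X \<in> sets M" for X
  proof -
    have "\<exists>B. B \<in> sets M \<and> B \<subseteq> X \<and> (\<forall>i\<in>I. m i B = m i X / 2)" using hv[OF that] by blast
    then show ?thesis unfolding h_def by (rule someI_ex)
  qed
  have hs: "\<And>X. X \<in> sets M \<Longrightarrow> h X \<in> sets M" using hp by blast
  have hsub: "\<And>X. X \<in> sets M \<Longrightarrow> h X \<subseteq> X" using hp by blast
  have hm: "\<And>X i. X \<in> sets M \<Longrightarrow> i \<in> I \<Longrightarrow> m i (h X) = m i X / 2" using hp by blast
  show ?thesis
  proof (rule exI[of _ "dchain h A"], intro conjI allI impI)
    fix s show "dchain h A s \<in> sets M"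
      by (rule chain_sets[where I=I and M=M and m=m and h=h and A=A]; (assumption | rule good hs hsub hm A)+)
  next
    fix s show "dchain h A s \<subseteq> A"
      by (rule chain_sub[where I=I and M=M and m=m and h=h and A=A]; (assumption | rule good hs hsub hm A)+)
  next
    fix s s' :: real assume a: "s \<le> s'" show "dchain h A s \<subseteq> dchain h A s'"
      by (rule chain_mono[where I=I and M=M and m=m and h=h and A=A]; (assumption | rule good hs hsub hm A a)+)
  next
    fix s :: real and i assume a: "0 \<le> s" "s \<le> 1" "i \<in> I"
    show "m i (dchain h A s) = s * m i A"
      by (rule chain_meas[where I=I and M=M and m=m and h=h and A=A]; (assumption | rule good hs hsub hm A a)+)
  qed
qed

lemma half_family:
  fixes M :: "'a measure" and I :: "nat set"
  assumes "finite I"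
  shows "\<forall>m A. (\<forall>i\<in>I. good M (m i)) \<longrightarrow> A \<in> sets M \<longrightarrow>
           (\<exists>B\<in>sets M. B \<subseteq> A \<and> (\<forall>i\<in>I. m i B = m i A / 2))"
  using assms
proof (induction I rule: finite_induct)
  case empty then show ?case by blast
next
  case (insert j I)
  show ?case
  proof (intro allI impI)
    fix m :: "nat \<Rightarrow> 'a set \<Rightarrow> real" and A
    assume gm: "\<forall>i\<in>insert j I. good M (m i)" and A: "A \<in> sets M"
    have gj: "good M (m j)" using gm by blast
    show "\<exists>B\<in>sets M. B \<subseteq> A \<and> (\<forall>i\<in>insert j I. m i B = m i A / 2)"
    proof (cases "I = {}")
      case True
      have "0 \<le> m j A / 2" using good_nonneg[OF gj A] by simp
      moreover have "m j A / 2 \<le> m j A" using good_nonneg[OF gj A] by simp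
      ultimately obtain B where "B \<in> sets M" "B \<subseteq> A" "m j B = m j A / 2"
        using sierpinski[OF gj A] by blast
      then show ?thesis using True by blast
    next
      case False
      then obtain k where k: "k \<in> I" by blast
      define m' where "m' i = (\<lambda>X. m i X + m j X)" for i
      have gm': "good M (m' i)" if "i \<in> I" for i
      proof -
        have "good M (m i)" using gm that by blast
        then show ?thesis unfolding m'_def by (rule good_sum[OF _ gj])
      qed
      have gm'': "\<forall>i\<in>I. good M (m' i)" using gm' by blast
      have hv: "\<exists>B\<in>sets M. B \<subseteq> X \<and> (\<forall>i\<in>I. m' i B = m' i X / 2)" if "X \<in> sets M" for X
        using insert.IH[rule_format, OF gm' that] .
      have "\<exists>D. (\<forall>s. D s \<in> sets M \<and> D s \<subseteq> A) \<and> (\<forall>s s'. s \<le> s' \<longrightarrow> D s \<subseteq> D s') \<and>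
          (\<forall>s i. 0 \<le> s \<longrightarrow> s \<le> 1 \<longrightarrow> i \<in> I \<longrightarrow> m' i (D s) = s * m' i A)"
        by (rule chain_exists; (assumption | rule gm' hv A)+)
      then obtain D where D1: "\<forall>s. D s \<in> sets M \<and> D s \<subseteq> A"
        and D2: "\<forall>s s'. s \<le> s' \<longrightarrow> D s \<subseteq> D s'"
        and D3: "\<forall>s i. 0 \<le> s \<longrightarrow> s \<le> 1 \<longrightarrow> i \<in> I \<longrightarrow> m' i (D s) = s * m' i A"
        by blast
      have Ds: "\<And>s. D s \<in> sets M" "\<And>s. D s \<subseteq> A" using D1 by auto
      have Dmono: "\<And>s s'. s \<le> s' \<Longrightarrow> D s \<subseteq> D s'" using D2 by blast
      have Dm: "\<And>s i. 0 \<le> s \<Longrightarrow> s \<le> 1 \<Longrightarrow> i \<in> I \<Longrightarrow> m' i (D s) = s * m' i A" using D3 by blast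
      have gk: "good M (m k)" using gm k by blast
      have dom: "m j X \<le> m' k X" if "X \<in> sets M" for X
        unfolding m'_def using good_nonneg[OF gk that] by simp
      define C where "C = m' k A"
      have C0: "0 \<le> C" unfolding C_def m'_def using good_nonneg[OF gk A] good_nonneg[OF gj A] by simp
      define hh where "hh s = m j (D s)" for s
      have F1: "0 \<le> hh s' - hh s \<and> hh s' - hh s \<le> (s' - s) * C"
        if "0 \<le> s" "s \<le> s'" "s' \<le> 1" for s s'
      proof -
        have sub: "D s \<subseteq> D s'" using Dmono that by blast
        have e1: "m j (D s' - D s) = hh s' - hh s" unfolding hh_def using good_diff[OF gj Ds(1) Ds(1) sub] .
        have e2: "m' k (D s' - D s) = m' k (D s') - m' k (D s)"
          using good_diff[OF gm'[OF k] Ds(1) Ds(1) sub] .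
        have "m' k (D s') - m' k (D s) = (s' - s) * C"
          unfolding C_def using Dm[of s' k] Dm[of s k] that k by (simp add: algebra_simps)
        moreover have "m j (D s' - D s) \<le> m' k (D s' - D s)" using dom Ds(1) by blast
        moreover have "0 \<le> m j (D s' - D s)" using good_nonneg[OF gj] Ds(1) by blast
        ultimately show ?thesis using e1 e2 by simp
      qed
      have F1': "\<bar>hh a - hh b\<bar> \<le> \<bar>a - b\<bar> * C" if "0 \<le> a" "a \<le> 1" "0 \<le> b" "b \<le> 1" for a b
      proof (cases "a \<le> b")
        case True then show ?thesis using F1[of a b] that by (simp add: abs_if)
      next
        case False then show ?thesis using F1[of b a] that by (simp add: abs_if)
      qed
      define g where "g s = hh (s + 1/2) - hh s" for s
      have cont: "continuous_on {0..1/2} g"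
      proof (rule lipschitz_on_continuous_on[OF lipschitz_onI[of _ _ "2 * C"]])
        fix x y :: real assume "x \<in> {0..1/2}" "y \<in> {0..1/2}"
        then have "\<bar>hh (x + 1/2) - hh (y + 1/2)\<bar> \<le> \<bar>x - y\<bar> * C" "\<bar>hh x - hh y\<bar> \<le> \<bar>x - y\<bar> * C"
          using F1'[of "x + 1/2" "y + 1/2"] F1'[of x y] by auto
        moreover have "dist (g x) (g y) = \<bar>(hh (x + 1/2) - hh (y + 1/2)) - (hh x - hh y)\<bar>"
          unfolding g_def dist_real_def by (simp add: algebra_simps)
        moreover have "\<bar>(hh (x + 1/2) - hh (y + 1/2)) - (hh x - hh y)\<bar> \<le> \<bar>hh (x + 1/2) - hh (y + 1/2)\<bar> + \<bar>hh x - hh y\<bar>"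
          by (rule abs_triangle_ineq4)
        moreover have "2 * C * dist x y = \<bar>x - y\<bar> * C + \<bar>x - y\<bar> * C" unfolding dist_real_def by simp
        ultimately show "dist (g x) (g y) \<le> 2 * C * dist x y" by linarith
      qed (use C0 in simp)
      have h0: "hh 0 = 0"
      proof -
        have "m' k (D 0) = 0" using Dm[of 0 k] k by simp
        then have "hh 0 \<le> 0" unfolding hh_def using dom Ds(1) by (metis)
        moreover have "0 \<le> hh 0" unfolding hh_def by (rule good_nonneg[OF gj Ds(1)])
        ultimately show ?thesis by simp
      qed
      have h1: "hh 1 = m j A"
      proof -
        have "m' k (A - D 1) = m' k A - m' k (D 1)" using good_diff[OF gm'[OF k] A Ds(1) Ds(2)] .
        then have "m' k (A - D 1) = 0" using Dm[of 1 k] k by simp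
        then have "m j (A - D 1) \<le> 0" using dom[of "A - D 1"] A Ds(1) by auto
        moreover have "m j (A - D 1) = m j A - hh 1" unfolding hh_def using good_diff[OF gj A Ds(1) Ds(2)] .
        moreover have "hh 1 \<le> m j A" unfolding hh_def using good_mono[OF gj A Ds(1) Ds(2)] .
        ultimately show ?thesis by simp
      qed
      have sum: "g 0 + g (1/2) = m j A" unfolding g_def using h0 h1 by simp
      obtain s where s: "0 \<le> s" "s \<le> 1/2" "g s = m j A / 2"
      proof (cases "g 0 \<le> m j A / 2")
        case True
        then have "m j A / 2 \<le> g (1/2)" using sum by simp
        then show ?thesis using IVT'[of g 0 "m j A / 2" "1/2", OF True _ _ cont] that by auto
      next
        case False
        then have "g (1/2) \<le> m j A / 2" using sum by simp
        then show ?thesis using IVT2'[of g "1/2" "m j A / 2" 0, OF _ _ _ cont] False that by auto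
      qed
      define B where "B = D (s + 1/2) - D s"
      have sub: "D s \<subseteq> D (s + 1/2)" using Dmono by simp
      have Bs: "B \<in> sets M" unfolding B_def using Ds(1) by blast
      have BA: "B \<subseteq> A" unfolding B_def using Ds(2) by blast
      have Bj: "m j B = m j A / 2"
        unfolding B_def using good_diff[OF gj Ds(1) Ds(1) sub] s(3) unfolding g_def hh_def by simp
      have Bi: "m i B = m i A / 2" if i: "i \<in> I" for i
      proof -
        have "m' i B = m' i (D (s + 1/2)) - m' i (D s)"
          unfolding B_def using good_diff[OF gm'[OF i] Ds(1) Ds(1) sub] .
        also have "\<dots> = m' i A / 2" using Dm[of "s + 1/2" i] Dm[of s i] s i by (simp add: algebra_simps)
        finally have "m i B + m j B = (m i A + m j A) / 2" unfolding m'_def .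
        then show ?thesis using Bj by simp
      qed
      show ?thesis using Bs BA Bj Bi by blast
    qed
  qed
qed



lemma suc_le_pow2: "Suc n \<le> 2 ^ n"
  by (induction n) auto

lemma pow_half_le: assumes "1 \<le> r" shows "(1/2::real) ^ (r - 1) \<le> 1 / real r"
proof -
  have "r \<le> 2 ^ (r - 1)" using suc_le_pow2[of "r - 1"] assms by simp
  then have "real r \<le> 2 ^ (r - 1)" by (metis of_nat_le_iff of_nat_numeral of_nat_power)
  then have "1 / (2::real) ^ (r - 1) \<le> 1 / real r" using assms by (intro divide_left_mono) auto
  then show ?thesis by (simp add: power_divide)
qed

theorem lemma10:
  fixes M :: "'a measure" and mu :: "nat \<Rightarrow> 'a measure" and r :: nat and S :: "'a set"
  assumes r: "r \<ge> 1"
    and sets_mu: "\<And>i. i \<in> {1..r} \<Longrightarrow> sets (mu i) = sets M"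
    and fin: "\<And>i. i \<in> {1..r} \<Longrightarrow> finite_measure (mu i)"
    and na: "\<And>i. i \<in> {1..r} \<Longrightarrow> nonatomic (mu i)"
    and S: "S \<in> sets M"
    and prod_ne: "(\<Prod>i\<in>{1..r}. measure (mu i) S) \<noteq> 0"
  shows "\<exists>R l H F.
           (\<forall>k\<in>{1..r}. R k \<in> sets M \<and> R k \<subseteq> S) \<and>
           (\<forall>k\<in>{1..r}. \<forall>k'\<in>{1..r}. k \<noteq> k' \<longrightarrow> R k \<inter> R k' = {}) \<and>
           bij_betw l {1..r} {1..r} \<and>
           (\<forall>k\<in>{1..r}. measure (mu (l k)) (R k) = measure (mu (l k)) S / real r) \<and>
           (\<forall>k\<in>{1..r}. \<forall>j\<in>{1..r}. j > k \<longrightarrow>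
               measure (mu (l j)) (R k) \<le> measure (mu (l j)) S / real r) \<and>
           H \<in> sets M \<and> H \<subseteq> S \<and>
           measure (mu (l 1)) H \<ge> (1/2) ^ (r - 1) * measure (mu (l 1)) S \<and>
           gentleman_solution M mu r H F"
proof -
  define m where "m i = measure (mu i)" for i
  have gm: "good M (m i)" if "i \<in> {1..r}" for i
    unfolding m_def using good_measure[OF sets_mu[OF that] fin[OF that] na[OF that]] .
  have gm2: "\<forall>i\<in>{1..r}. good M (m i)" using gm by blast
  have hv: "\<exists>B\<in>sets M. B \<subseteq> X \<and> (\<forall>i\<in>{1..r}. m i B = m i X / 2)" if "X \<in> sets M" for X
    using half_family[of "{1..r}" M, rule_format, OF _ gm that] by simp
  have "\<exists>D. (\<forall>s. D s \<in> sets M \<and> D s \<subseteq> S) \<and> (\<forall>s s'. s \<le> s' \<longrightarrow> D s \<subseteq> D s') \<and>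
      (\<forall>s i. 0 \<le> s \<longrightarrow> s \<le> 1 \<longrightarrow> i \<in> {1..r} \<longrightarrow> m i (D s) = s * m i S)"
    by (rule chain_exists; (assumption | rule gm hv S)+)
  then obtain D where D1: "\<forall>s. D s \<in> sets M \<and> D s \<subseteq> S"
    and D2: "\<forall>s s'. s \<le> s' \<longrightarrow> D s \<subseteq> D s'"
    and D3: "\<forall>s i. 0 \<le> s \<longrightarrow> s \<le> 1 \<longrightarrow> i \<in> {1..r} \<longrightarrow> m i (D s) = s * m i S"
    by blast
  have Ds: "\<And>s. D s \<in> sets M" "\<And>s. D s \<subseteq> S" using D1 by auto
  have Dmono: "\<And>s s'. s \<le> s' \<Longrightarrow> D s \<subseteq> D s'" using D2 by blast
  have Dm: "\<And>s i. 0 \<le> s \<Longrightarrow> s \<le> 1 \<Longrightarrow> i \<in> {1..r} \<Longrightarrow> m i (D s) = s * m i S" using D3 by blast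
  have rpos: "0 < real r" using r by simp
  define P where "P k = D (real k / real r) - D ((real k - 1) / real r)" for k :: nat
  have Psets: "P k \<in> sets M" for k unfolding P_def using Ds(1) by blast
  have PS: "P k \<subseteq> S" for k unfolding P_def using Ds(2) by blast
  have Pmeas: "measure (mu i) (P k) = measure (mu i) S / real r" if k: "k \<in> {1..r}" and i: "i \<in> {1..r}" for k i
  proof -
    have le: "(real k - 1) / real r \<le> real k / real r" using rpos by (simp add: divide_right_mono)
    have a0: "0 \<le> (real k - 1) / real r" using k rpos by simp
    have a1: "real k / real r \<le> 1" using k rpos by simp
    have b1: "(real k - 1) / real r \<le> 1" using le a1 by linarith
    have b0: "0 \<le> real k / real r" using rpos by simp
    have "m i (P k) = m i (D (real k / real r)) - m i (D ((real k - 1) / real r))"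
      unfolding P_def using good_diff[OF gm[OF i] Ds(1) Ds(1) Dmono[OF le]] .
    also have "\<dots> = real k / real r * m i S - (real k - 1) / real r * m i S"
      using Dm[OF b0 a1 i] Dm[OF a0 b1 i] by simp
    also have "\<dots> = m i S / real r" using rpos by (simp add: field_simps)
    finally show ?thesis unfolding m_def .
  qed
  have Pdisj_lt: "P k \<inter> P k' = {}" if "k < k'" for k k'
  proof -
    have "real k \<le> real k' - 1" using that by linarith
    then have "real k / real r \<le> (real k' - 1) / real r" using rpos by (simp add: divide_right_mono)
    then have "D (real k / real r) \<subseteq> D ((real k' - 1) / real r)" by (rule Dmono)
    then show ?thesis unfolding P_def by blast
  qed
  have Pdisj: "P k \<inter> P k' = {}" if "k \<noteq> k'" for k k'
  proof (cases "k < k'")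
    case True then show ?thesis using Pdisj_lt by blast
  next
    case False then have "k' < k" using that by simp
    then show ?thesis using Pdisj_lt[of k' k] by blast
  qed
  define H where "H = (\<Union>k\<in>{1..r}. P k)"
  have Hs: "H \<in> sets M" unfolding H_def using Psets by auto
  have HS: "H \<subseteq> S" unfolding H_def using PS by auto
  have one: "1 \<in> {1..r}" using r by simp
  have "measure (mu 1) (P 1) \<le> measure (mu 1) H"
    using good_mono[OF gm[OF one] Hs Psets] one unfolding H_def m_def by blast
  moreover have "measure (mu 1) (P 1) = measure (mu 1) S / real r" using Pmeas[OF one one] .
  moreover have "(1/2) ^ (r - 1) * measure (mu 1) S \<le> measure (mu 1) S / real r"
  proof -
    have "0 \<le> measure (mu 1) S" by simp
    then have "(1/2) ^ (r - 1) * measure (mu 1) S \<le> 1 / real r * measure (mu 1) S"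
      using pow_half_le[OF r] by (rule mult_right_mono[rotated])
    then show ?thesis by simp
  qed
  ultimately have Hbig: "(1/2) ^ (r - 1) * measure (mu 1) S \<le> measure (mu 1) H" by linarith
  have gs: "gentleman_solution M mu r H P"
    unfolding gentleman_solution_def H_def using Psets Pdisj Pmeas by auto
  show ?thesis
    apply (rule exI[of _ P], rule exI[of _ id], rule exI[of _ H], rule exI[of _ P])
    using Psets PS Pdisj Pmeas Hs HS Hbig gs by auto
qed


end
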